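(* Let $A\in\mathbb{C}^{n\times n}$ be Hermitian, $f(x)=\frac12\|xx^*-A\|_F^2$ with $\nabla f(x)=2(xx^*-A)x$, and let $x_0\in\mathbb{C}^{n\times p}_*$. Consider two iterations started from the same point and using the same step sizes $\alpha_k>0$: (i) (Euclidean nonlinear CG) $\eta_0=-\nabla f(x_0)$, $x_{k+1}=x_k+\alpha_k\eta_k$, $\eta_{k+1}=-\nabla f(x_{k+1})+\beta_{k+1}\eta_k$ with either $\beta_{k+1}=\max\!\big(0,\frac{\langle\nabla f(x_{k+1}),\nabla f(x_{k+1})-\nabla f(x_k)\rangle}{\langle\nabla f(x_k),\nabla f(x_k)\rangle}\big)$ (Polak–Ribière$_+$) or $\beta_{k+1}=\frac{\langle\nabla f(x_{k+1}),\nabla f(x_{k+1})\rangle}{\langle\nabla f(x_k),\nabla f(x_k)\rangle}$ (Fletcher–Reeves); (ii) (lifted Riemannian CG on $\mathbb{C}^{n\times p}_*/\mathcal O_p$) $y_0=x_0$, $\zeta_0=-\nabla f(y_0)$, $y_{k+1}=y_k+\alpha_k\zeta_k$, $\zeta_{k+1}=-\nabla f(y_{k+1})+\gamma_{k+1}P^{\mathcal H}_{y_{k+1}}(\zeta_k)$, with either $\gamma_{k+1}=\max\!\big(0,\frac{\langle\nabla f(y_{k+1}),\nabla f(y_{k+1})-P^{\mathcal H}_{y_{k+1}}(\nabla f(y_k))\rangle}{\langle\nabla f(y_k),\nabla f(y_k)\rangle}\big)$ (PR$_+$) or $\gamma_{k+1}=\frac{\langle\nabla f(y_{k+1}),\nabla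 f(y_{k+1})\rangle}{\langle\nabla f(y_k),\nabla f(y_k)\rangle}$ (FR), the same rule being used in (i) and (ii). Assume all iterates lie in $\mathbb{C}^{n\times p}_*$ and all denominators are nonzero. Then $y_k=x_k$ and $\zeta_k=\eta_k$ for all $k\ge0$.
   Context: $\mathbb{C}^{n\times p}_*=\{X\in\mathbb{C}^{n\times p}:\operatorname{rank}X=p\}$; $\mathcal O_p$ is the group of $p\times p$ unitary matrices acting by right multiplication. $\mathbb{C}^{n\times p}$ is a real vector space with inner product $\langle U,V\rangle=\Re\operatorname{tr}(U^*V)$. For $y\in\mathbb{C}^{n\times p}_*$ the horizontal space is $\mathcal H_y=\{z: y^*z=z^*y\}$, and the orthogonal projection onto it is $P^{\mathcal H}_y(z)=z-y\Omega$ where $\Omega$ is the unique solution of $\Omega\,y^*y+y^*y\,\Omega=y^*z-z^*y$. *)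

theory Defs
  imports "HOL-Analysis.Analysis"
begin

text \<open>Complex n x p matrices are rendered as complex^'p^'n (rows indexed by 'n, columns by 'p).\<close>

definition adj :: "complex^'p^'n \<Rightarrow> complex^'n^'p" where
  "adj X = (\<chi> i j. cnj (X $ j $ i))"

text \<open>Real inner product  Re tr(U^* V).\<close>
definition rinner :: "complex^'p^'n \<Rightarrow> complex^'p^'n \<Rightarrow> real" where
  "rinner U V = Re (\<Sum>i\<in>UNIV. \<Sum>j\<in>UNIV. cnj (U $ i $ j) * V $ i $ j)"

text \<open>Membership in C^{n x p}_* : rank X = p (rank over the field of complex numbers).\<close>
definition full_rank :: "complex^'p^'n \<Rightarrow> bool" where
  "full_rank X \<longleftrightarrow> rank X = CARD('p)"

definition hermitian :: "complex^'n^'n \<Rightarrow> bool" where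
  "hermitian A \<longleftrightarrow> adj A = A"

text \<open>Gradient of f(x) = 1/2 Frobenius-norm-squared of (x x^* - A), namely 2 (x x^* - A) x.\<close>
definition gradF :: "complex^'n^'n \<Rightarrow> complex^'p^'n \<Rightarrow> complex^'p^'n" where
  "gradF A x = 2 *\<^sub>R ((x ** adj x - A) ** x)"

definition Omega :: "complex^'p^'n \<Rightarrow> complex^'p^'n \<Rightarrow> complex^'p^'p" where
  "Omega y z = (THE W. W ** (adj y ** y) + (adj y ** y) ** W = adj y ** z - adj z ** y)"

text \<open>Orthogonal projection onto the horizontal space at y.\<close>
definition projH :: "complex^'p^'n \<Rightarrow> complex^'p^'n \<Rightarrow> complex^'p^'n" where
  "projH y z = z - y ** Omega y z"

text \<open>CG coefficient: if pr then Polak-Ribiere+ else Fletcher-Reeves.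
  gnew = new gradient, gold' = (possibly transported) old gradient in the numerator,
  gold = old gradient in the denominator.\<close>
definition cg_coeff :: "bool \<Rightarrow> complex^'p^'n \<Rightarrow> complex^'p^'n \<Rightarrow> complex^'p^'n \<Rightarrow> real" where
  "cg_coeff pr gnew gold' gold =
     (if pr then max 0 (rinner gnew (gnew - gold') / rinner gold gold)
      else rinner gnew gnew / rinner gold gold)"

end

theory Submission
  imports Defs
begin

lemma fr_inj:
  fixes A :: "'a::field^'n^'m"
  assumes "rank A = CARD('n)" shows "inj ((*v) A)"
proof -
  have "vec.dim (rows A) = vec.dim (UNIV::('a^'n) set)" using assms
    by (metis row_rank_def_gen vec_dim_card)
  then have "vec.span (rows A) = UNIV"
    by (metis vec.dim_UNIV vec.dim_eq_full vec.dimension_def)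
  then show ?thesis
    using matrix_left_invertible_span_rows_gen matrix_left_invertible_injective by metis
qed

definition tr :: "complex^'p^'p \<Rightarrow> complex" where
  "tr X = (\<Sum>i\<in>UNIV. X$i$i)"

definition horiz :: "complex^'p^'n \<Rightarrow> complex^'p^'n \<Rightarrow> bool" where
  "horiz y z \<longleftrightarrow> adj y ** z = adj z ** y"

lemma adj_adj[simp]: "adj (adj X) = X"
  by (simp add: adj_def vec_eq_iff)

lemma adj_mult: "adj (A ** B) = adj B ** adj (A::complex^'b^'a)"
  by (simp add: adj_def matrix_matrix_mult_def vec_eq_iff mult.commute)

lemma adj_add[simp]: "adj (A + B) = adj A + adj B"
  by (simp add: adj_def vec_eq_iff)
lemma adj_diff[simp]: "adj (A - B) = adj A - adj B"
  by (simp add: adj_def vec_eq_iff)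
lemma adj_minus[simp]: "adj (- A) = - adj A"
  by (simp add: adj_def vec_eq_iff)
lemma adj_scaleR[simp]: "adj (c *\<^sub>R A) = c *\<^sub>R adj A"
  by (simp add: adj_def vec_eq_iff)

lemma mult_rdistrib: "(A + B) ** C = A ** C + B ** (C::complex^'c^'b)"
  by (simp add: matrix_matrix_mult_def vec_eq_iff distrib_right sum.distrib)
lemma mult_ldiff: "C ** (A - B) = C ** A - C ** (B::complex^'c^'b)"
  by (simp add: matrix_matrix_mult_def vec_eq_iff right_diff_distrib sum_subtractf)
lemma mult_rdiff: "(A - B) ** C = A ** C - B ** (C::complex^'c^'b)"
  by (simp add: matrix_matrix_mult_def vec_eq_iff left_diff_distrib sum_subtractf)
lemma mult_lminus: "(- A) ** C = - (A ** (C::complex^'c^'b))"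
  by (simp add: matrix_matrix_mult_def vec_eq_iff sum_negf)
lemma mult_rminus: "C ** (- A) = - (C ** (A::complex^'c^'b))"
  by (simp add: matrix_matrix_mult_def vec_eq_iff sum_negf)
lemma mult_lscale: "(c *\<^sub>R A) ** C = c *\<^sub>R (A ** (C::complex^'c^'b))"
  by (simp add: scalar_matrix_assoc)
lemma mult_rscale: "C ** (c *\<^sub>R A) = c *\<^sub>R (C ** (A::complex^'c^'b))"
  by (simp add: matrix_matrix_mult_def vec_eq_iff scaleR_sum_right)

lemma rinner_tr: "rinner U V = Re (tr (adj U ** V))"
  unfolding rinner_def tr_def
  by (simp add: adj_def matrix_matrix_mult_def, subst sum.swap, simp)

lemma tr_comm: "tr (A ** B) = tr (B ** (A::complex^'b^'a))"
  unfolding tr_def matrix_matrix_mult_def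
  by (simp, subst sum.swap, simp add: mult.commute)

lemma tr_adj: "tr (adj X) = cnj (tr X)"
  by (simp add: tr_def adj_def)

lemma tr_minus: "tr (- X) = - tr X"
  by (simp add: tr_def sum_negf)

lemma tr_add: "tr (X + Y) = tr X + tr Y"
  by (simp add: tr_def sum.distrib)

definition frobR :: "complex^'p^'n \<Rightarrow> real" where
  "frobR X = (\<Sum>i\<in>UNIV. \<Sum>j\<in>UNIV. (cmod (X$i$j))^2)"

lemma frob_tr: "tr (adj X ** X) = of_real (frobR X)"
proof -
  have "tr (adj X ** X) = (\<Sum>j\<in>UNIV. \<Sum>i\<in>UNIV. cnj (X$i$j) * X$i$j)"
    by (simp add: tr_def adj_def matrix_matrix_mult_def)
  also have "\<dots> = (\<Sum>i\<in>UNIV. \<Sum>j\<in>UNIV. cnj (X$i$j) * X$i$j)"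
    by (rule sum.swap)
  also have "\<dots> = of_real (frobR X)"
    unfolding frobR_def of_real_sum
    by (intro sum.cong refl) (metis complex_norm_square mult.commute of_real_power)
  finally show ?thesis .
qed

lemma frob_nonneg: "frobR X \<ge> 0"
  unfolding frobR_def by (intro sum_nonneg) auto

lemma frob_zero: "frobR X = 0 \<Longrightarrow> X = 0"
  unfolding frobR_def
  by (simp add: sum_nonneg_eq_0_iff sum_nonneg vec_eq_iff)

lemma fr_col:
  assumes "full_rank (y::complex^'p^'n)" "y ** W = 0" shows "W = 0"
proof -
  have inj: "inj ((*v) y)" using assms(1) fr_inj unfolding full_rank_def by blast
  have "(\<chi> k. W$k$j) = 0" for j
  proof -
    have "y *v (\<chi> k. W$k$j) = 0"
      using assms(2) by (simp add: vec_eq_iff matrix_matrix_mult_def matrix_vector_mult_def)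
    then show ?thesis using inj by (metis injD matrix_vector_mult_0_right)
  qed
  then show ?thesis by (simp add: vec_eq_iff)
qed

lemma uniq0:
  assumes fr: "full_rank (y::complex^'p^'n)"
    and eq: "W ** (adj y ** y) + (adj y ** y) ** W = 0"
  shows "W = 0"
proof -
  have "tr (adj W ** (W ** (adj y ** y) + (adj y ** y) ** W)) = 0" using eq by (simp add: tr_def)
  then have "tr (adj W ** W ** adj y ** y) + tr (adj W ** adj y ** y ** W) = 0"
    by (simp add: matrix_add_ldistrib tr_add matrix_mul_assoc)
  moreover have "tr (adj W ** W ** adj y ** y) = tr (adj (W ** adj y) ** (W ** adj y))"
    by (simp add: tr_comm[of "adj W ** W ** adj y" y] adj_mult matrix_mul_assoc)
  moreover have "tr (adj W ** adj y ** y ** W) = tr (adj (y ** W) ** (y ** W))"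
    by (simp add: adj_mult matrix_mul_assoc)
  ultimately have "frobR (W ** adj y) + frobR (y ** W) = 0"
    by (simp add: frob_tr) (metis of_real_0 of_real_add of_real_eq_iff)
  then have "frobR (y ** W) = 0" using frob_nonneg[of "W ** adj y"] frob_nonneg[of "y ** W"] by linarith
  then show ?thesis using fr_col[OF fr] frob_zero by blast
qed

lemma uniq:
  assumes fr: "full_rank (y::complex^'p^'n)"
    and eq: "W1 ** (adj y ** y) + (adj y ** y) ** W1 = W2 ** (adj y ** y) + (adj y ** y) ** W2"
  shows "W1 = W2"
proof -
  have "(W1 - W2) ** (adj y ** y) + (adj y ** y) ** (W1 - W2)
     = (W1 ** (adj y ** y) - W2 ** (adj y ** y)) + ((adj y ** y) ** W1 - (adj y ** y) ** W2)"
    by (simp only: mult_ldiff mult_rdiff)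
  also have "\<dots> = (W1 ** (adj y ** y) + (adj y ** y) ** W1) - (W2 ** (adj y ** y) + (adj y ** y) ** W2)"
    by (rule add_diff_add[symmetric])
  also have "\<dots> = 0" unfolding eq by (rule diff_self)
  finally have "(W1 - W2) ** (adj y ** y) + (adj y ** y) ** (W1 - W2) = 0" .
  then have "W1 - W2 = 0" by (rule uniq0[OF fr])
  then show ?thesis by simp
qed

lemma exist:
  assumes fr: "full_rank (y::complex^'p^'n)"
  shows "\<exists>W. W ** (adj y ** y) + (adj y ** y) ** W = R"
proof -
  define L where "L = (\<lambda>W::complex^'p^'p. W ** (adj y ** y) + (adj y ** y) ** W)"
  have lin: "linear L"
  proof (rule linearI)
    fix a b show "L (a + b) = L a + L b"
      unfolding L_def mult_rdistrib matrix_add_ldistrib by (simp only: ac_simps)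
  next
    fix c :: real and a show "L (c *\<^sub>R a) = c *\<^sub>R L a"
      unfolding L_def mult_lscale mult_rscale by (simp only: scaleR_add_right)
  qed
  have "inj L" unfolding L_def by (rule injI) (rule uniq[OF fr])
  then have "surj L" by (rule linear_inj_imp_surj[OF lin])
  then obtain W where "R = L W" by blast
  then show ?thesis unfolding L_def by blast
qed

lemma Omega_sol:
  assumes fr: "full_rank y"
  shows "Omega y z ** (adj y ** y) + (adj y ** y) ** Omega y z = adj y ** z - adj z ** y"
proof -
  obtain W where W: "W ** (adj y ** y) + (adj y ** y) ** W = adj y ** z - adj z ** y"
    using exist[OF fr] by blast
  have "Omega y z = W" unfolding Omega_def
  proof (rule the_equality)
    show "W ** (adj y ** y) + (adj y ** y) ** W = adj y ** z - adj z ** y" by (rule W)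
  next
    fix V assume V: "V ** (adj y ** y) + (adj y ** y) ** V = adj y ** z - adj z ** y"
    show "V = W" by (rule uniq[OF fr]) (simp only: V W)
  qed
  then show ?thesis using W by simp
qed

lemma projH_id:
  assumes fr: "full_rank y" and h: "horiz y z"
  shows "projH y z = z"
proof -
  have "Omega y z ** (adj y ** y) + (adj y ** y) ** Omega y z = 0"
    using Omega_sol[OF fr, of z] h by (simp add: horiz_def)
  then have "Omega y z = 0" using uniq0[OF fr] by blast
  then show ?thesis by (simp add: projH_def)
qed

lemma Omega_skew:
  assumes fr: "full_rank y"
  shows "adj (Omega y z) = - Omega y z"
proof -
  let ?W = "Omega y z" and ?N = "adj y ** y"
  have s: "?W ** ?N + ?N ** ?W = adj y ** z - adj z ** y" by (rule Omega_sol[OF fr])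
  have "adj (?W ** ?N + ?N ** ?W) = adj (adj y ** z - adj z ** y)" using s by simp
  then have e: "?N ** adj ?W + adj ?W ** ?N = adj z ** y - adj y ** z"
    by (simp add: adj_mult matrix_mul_assoc)
  have "(- adj ?W) ** ?N + ?N ** (- adj ?W) = - (?N ** adj ?W + adj ?W ** ?N)"
    by (simp add: mult_lminus mult_rminus)
  also have "\<dots> = adj y ** z - adj z ** y" using e by simp
  also have "\<dots> = ?W ** ?N + ?N ** ?W" using s by simp
  finally have "(- adj ?W) ** ?N + ?N ** (- adj ?W) = ?W ** ?N + ?N ** ?W" .
  then have "- adj ?W = ?W" by (rule uniq[OF fr])
  then show ?thesis by (metis minus_minus)
qed

lemma rinner_diff_right: "rinner U (V - W) = rinner U V - rinner U W"
  by (simp add: rinner_def right_diff_distrib sum_subtractf)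

lemma rinner_proj:
  assumes fr: "full_rank y" and h: "horiz y g"
  shows "rinner g (projH y z) = rinner g z"
proof -
  let ?O = "Omega y z"
  define H where "H = adj g ** y"
  have H: "adj H = H" using h unfolding H_def horiz_def by (simp add: adj_mult)
  have "cnj (tr (H ** ?O)) = tr (adj ?O ** adj H)" by (simp add: tr_adj[symmetric] adj_mult)
  also have "\<dots> = - tr (H ** ?O)"
    by (simp add: H Omega_skew[OF fr] mult_lminus tr_minus tr_comm[of ?O H])
  finally have c: "cnj (tr (H ** ?O)) = - tr (H ** ?O)" .
  have "Re (cnj (tr (H ** ?O))) = Re (- tr (H ** ?O))" using c by simp
  then have "Re (tr (H ** ?O)) = 0" by simp
  then have "rinner g (y ** ?O) = 0"
    by (simp add: rinner_tr H_def matrix_mul_assoc)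
  then show ?thesis by (simp add: projH_def rinner_diff_right)
qed


lemma grad_horiz:
  assumes herm: "hermitian A"
  shows "horiz x (gradF A x)"
proof -
  have hA: "adj A = A" using herm by (simp add: hermitian_def)
  have "adj (x ** adj x - A) = x ** adj x - A" by (simp add: adj_mult hA)
  then show ?thesis
    unfolding horiz_def gradF_def
    by (simp add: mult_rscale mult_lscale adj_mult matrix_mul_assoc)
qed

lemma horiz_add: "horiz y a \<Longrightarrow> horiz y b \<Longrightarrow> horiz y (a + b)"
  by (simp add: horiz_def matrix_add_ldistrib mult_rdistrib)
lemma horiz_minus: "horiz y a \<Longrightarrow> horiz y (- a)"
  by (simp add: horiz_def mult_lminus mult_rminus)
lemma horiz_scale: "horiz y a \<Longrightarrow> horiz y (c *\<^sub>R a)"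
  by (simp add: horiz_def mult_lscale mult_rscale)
lemma horiz_step: "horiz y z \<Longrightarrow> horiz (y + c *\<^sub>R z) z"
  by (simp add: horiz_def matrix_add_ldistrib mult_rdistrib mult_lscale mult_rscale)

theorem theorem3p2:
  fixes A :: "complex^'n^'n"
    and x eta y zeta :: "nat \<Rightarrow> complex^'p^'n"
    and alpha :: "nat \<Rightarrow> real"
    and pr :: bool
  assumes herm: "hermitian A"
    and alpha_pos: "\<And>k. alpha k > 0"
    and x0: "full_rank (x 0)"
    and eta0: "eta 0 = - gradF A (x 0)"
    and x_step: "\<And>k. x (Suc k) = x k + alpha k *\<^sub>R eta k"
    and eta_step: "\<And>k. eta (Suc k) = - gradF A (x (Suc k))
                     + cg_coeff pr (gradF A (x (Suc k))) (gradF A (x k)) (gradF A (x k)) *\<^sub>R eta k"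
    and y0: "y 0 = x 0"
    and zeta0: "zeta 0 = - gradF A (y 0)"
    and y_step: "\<And>k. y (Suc k) = y k + alpha k *\<^sub>R zeta k"
    and zeta_step: "\<And>k. zeta (Suc k) = - gradF A (y (Suc k))
                     + cg_coeff pr (gradF A (y (Suc k))) (projH (y (Suc k)) (gradF A (y k))) (gradF A (y k))
                       *\<^sub>R projH (y (Suc k)) (zeta k)"
    and x_rank: "\<And>k. full_rank (x k)"
    and y_rank: "\<And>k. full_rank (y k)"
    and x_denom: "\<And>k. rinner (gradF A (x k)) (gradF A (x k)) \<noteq> 0"
    and y_denom: "\<And>k. rinner (gradF A (y k)) (gradF A (y k)) \<noteq> 0"
  shows "\<forall>k. y k = x k \<and> zeta k = eta k"
  proof -
  have "y k = x k \<and> zeta k = eta k \<and> horiz (y k) (zeta k)" for k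
  proof (induction k)
    case 0
    show ?case using y0 zeta0 eta0 grad_horiz[OF herm] horiz_minus by auto
  next
    case (Suc k)
    then have yk: "y k = x k" and zk: "zeta k = eta k" and hk: "horiz (y k) (zeta k)" by auto
    have ys: "y (Suc k) = x (Suc k)" using y_step x_step yk zk by simp
    have h1: "horiz (y (Suc k)) (zeta k)" using y_step hk horiz_step by simp
    have fr: "full_rank (y (Suc k))" by (rule y_rank)
    have p1: "projH (y (Suc k)) (zeta k) = zeta k" by (rule projH_id[OF fr h1])
    have hg: "horiz (y (Suc k)) (gradF A (y (Suc k)))" by (rule grad_horiz[OF herm])
    have c: "cg_coeff pr (gradF A (y (Suc k))) (projH (y (Suc k)) (gradF A (y k))) (gradF A (y k))
           = cg_coeff pr (gradF A (y (Suc k))) (gradF A (y k)) (gradF A (y k))"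
      unfolding cg_coeff_def by (simp add: rinner_diff_right rinner_proj[OF fr hg])
    have zs: "zeta (Suc k) = eta (Suc k)"
      using zeta_step[of k] eta_step[of k] c p1 ys yk zk by simp
    have "horiz (y (Suc k)) (zeta (Suc k))"
      unfolding zeta_step[of k] p1
      by (intro horiz_add horiz_minus horiz_scale hg h1)
    then show ?case using ys zs by simp
  qed
  then show ?thesis by blast
qed

end
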